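(* Let $t$ be even, $c\ge 0$ an integer, and $S\subseteq[n]$ with $|S|\geq n/k^c$. Let $\mathcal B$ be the following system of polynomial constraints in scalar variables $z_r^{i,j}$ ($r\in[n]$, $i,j\in[k]$) and vector variables $v_r\in\mathbb R^d$ ($r\in[n]$): (i) $z_r^{i,j}=(z_r^{i,j})^2$ for all $r,i,j$; (ii) $\sum_{i=1}^k\sum_{j=1}^k z_r^{i,j}=1$ for all $r$; (iii) $z_r^{i,j}z_s^{i,j}(v_r-v_s)=0$ for all $i,j\in[k]$, $r,s\in[n]$; (iv) for all $u\in\mathbb R^d$: $\frac1n\sum_{r=1}^n\langle v_r,u\rangle^t\leq 2\cdot(4t)^{t/2}\|u\|_2^t$. Then for all $i,j\in[k]$, $$\mathcal B\vdash_{O(t)}\ \frac{1}{|S|}\sum_{r\in S}z_r^{i,j}\|v_r\|_2^t\leq 2\cdot k^c\cdot(4t)^{t/2}.$$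
   Context: $\mathcal B\vdash_s p\geq 0$ means there is a degree-$s$ sum-of-squares proof: $p$ is a sum of terms $b\cdot\prod q$ with $b$ a sum of squares of polynomials and $q$ ranging over (products of) the constraints, each term of degree at most $s$ (an equality constraint $q=0$ may be used with either sign and multiplied by arbitrary polynomials). The universally quantified constraint (iv) is understood as being certified by a sum-of-squares proof in the variables $u$, so that it may be used in sum-of-squares proofs with $u$ instantiated as any vector whose entries are polynomials of degree at most $2$ in the variables $z_r^{i,j},v_r$. *)

theory Defs
  imports Complex_Main "HOL-Library.Poly_Mapping"
begin

text \<open>Variables of the constraint system: Zv r i j is the scalar z_r^{i,j};
  Vv r a is the a-th coordinate of the vector variable v_r (all indices 0-based).\<close>
datatype pvar = Zv nat nat nat | Vv nat nat

type_synonym mpoly = "(pvar \<Rightarrow>\<^sub>0 nat) \<Rightarrow>\<^sub>0 real"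

definition PVar :: "pvar \<Rightarrow> mpoly" where
  "PVar x = Poly_Mapping.single (Poly_Mapping.single x 1) 1"

definition PConst :: "real \<Rightarrow> mpoly" where
  "PConst c = Poly_Mapping.single 0 c"

definition mdeg :: "(pvar \<Rightarrow>\<^sub>0 nat) \<Rightarrow> nat" where
  "mdeg m = (\<Sum>x\<in>Poly_Mapping.keys m. Poly_Mapping.lookup m x)"

text \<open>Total degree (0 for the zero polynomial).\<close>
definition tdeg :: "mpoly \<Rightarrow> nat" where
  "tdeg p = Max (insert 0 (mdeg ` Poly_Mapping.keys p))"

text \<open>Degree-s sum-of-squares derivability of p \<ge> 0 from inequality axioms Ineq (q \<ge> 0)
  and equality axioms Eq (e = 0):
  p = sum of terms (sum of squares) * (product of inequality axioms)
      + sum of (arbitrary polynomial) * (equality axiom),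
  each term of degree at most s.\<close>
definition sos_derivable :: "mpoly set \<Rightarrow> mpoly set \<Rightarrow> nat \<Rightarrow> mpoly \<Rightarrow> bool" where
  "sos_derivable Ineq Eq s p \<longleftrightarrow>
     (\<exists>(ts :: (mpoly list \<times> mpoly list) list) (es :: (mpoly \<times> mpoly) list).
        (\<forall>(gs, qs) \<in> set ts. set qs \<subseteq> Ineq \<and>
            (\<forall>g \<in> set gs. 2 * tdeg g + sum_list (map tdeg qs) \<le> s)) \<and>
        (\<forall>(h, e) \<in> set es. e \<in> Eq \<and> tdeg h + tdeg e \<le> s) \<and>
        p = (\<Sum>(gs, qs) \<leftarrow> ts. (\<Sum>g \<leftarrow> gs. g ^ 2) * prod_list qs)
            + (\<Sum>(h, e) \<leftarrow> es. h * e))"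

abbreviation Zp :: "nat \<Rightarrow> nat \<Rightarrow> nat \<Rightarrow> mpoly" where
  "Zp r i j \<equiv> PVar (Zv r i j)"

abbreviation Vp :: "nat \<Rightarrow> nat \<Rightarrow> mpoly" where
  "Vp r a \<equiv> PVar (Vv r a)"

text \<open>Equality constraints (i), (ii), (iii) (the vector equation (iii) coordinatewise).\<close>
definition B_eq :: "nat \<Rightarrow> nat \<Rightarrow> nat \<Rightarrow> mpoly set" where
  "B_eq n k d =
     {Zp r i j - Zp r i j ^ 2 | r i j. r < n \<and> i < k \<and> j < k}
   \<union> {(\<Sum>i<k. \<Sum>j<k. Zp r i j) - 1 | r. r < n}
   \<union> {Zp r i j * Zp s i j * (Vp r a - Vp s a) | i j r s a.
         i < k \<and> j < k \<and> r < n \<and> s < n \<and> a < d}"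

text \<open>Inequality constraint (iv), instantiated at every vector u whose entries are
  polynomials of degree at most 2 (t even, so ||u||^t = (sum u_a^2)^(t/2)).\<close>
definition B_ineq :: "nat \<Rightarrow> nat \<Rightarrow> nat \<Rightarrow> mpoly set" where
  "B_ineq n d t =
     {PConst (2 * (4 * real t) ^ (t div 2)) * (\<Sum>a<d. U a ^ 2) ^ (t div 2)
        - PConst (1 / real n) * (\<Sum>r<n. (\<Sum>a<d. Vp r a * U a) ^ t) | U.
        \<forall>a<d. tdeg (U a) \<le> 2}"

end

theory Submission
  imports Defs
begin

lemma tdeg_le_iff: "tdeg p \<le> s \<longleftrightarrow> (\<forall>m\<in>Poly_Mapping.keys p. mdeg m \<le> s)"
  unfolding tdeg_def by (simp add: Max_le_iff)

lemma mdeg_sub: "finite K \<Longrightarrow> Poly_Mapping.keys a \<subseteq> K \<Longrightarrow> mdeg a = (\<Sum>x\<in>K. Poly_Mapping.lookup a x)"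
  unfolding mdeg_def by (rule sum.mono_neutral_left) (auto simp: in_keys_iff)

lemma mdeg_add: "mdeg (a + b) = mdeg a + mdeg b"
proof -
  let ?K = "Poly_Mapping.keys a \<union> Poly_Mapping.keys b"
  have f: "finite ?K" by simp
  have "mdeg (a+b) = (\<Sum>x\<in>?K. Poly_Mapping.lookup (a+b) x)"
    by (rule mdeg_sub[OF f keys_add])
  also have "\<dots> = (\<Sum>x\<in>?K. Poly_Mapping.lookup a x) + (\<Sum>x\<in>?K. Poly_Mapping.lookup b x)"
    by (simp only: lookup_add sum.distrib)
  also have "\<dots> = mdeg a + mdeg b"
    by (simp only: mdeg_sub[OF f Un_upper1] mdeg_sub[OF f Un_upper2])
  finally show ?thesis .
qed

lemma mdeg_zero[simp]: "mdeg 0 = 0" by (simp add: mdeg_def)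

lemma tdeg_mult: "tdeg p \<le> a \<Longrightarrow> tdeg q \<le> b \<Longrightarrow> tdeg (p * q) \<le> a + b"
  unfolding tdeg_le_iff
  using keys_mult[of p q] by (force simp: mdeg_add intro: add_mono)

lemma tdeg_add: "tdeg p \<le> a \<Longrightarrow> tdeg q \<le> a \<Longrightarrow> tdeg (p + q) \<le> a"
  unfolding tdeg_le_iff using keys_add[of p q] by blast

lemma tdeg_minus[simp]: "tdeg (- p) = tdeg p"
  unfolding tdeg_def by simp

lemma tdeg_diff: "tdeg p \<le> a \<Longrightarrow> tdeg q \<le> a \<Longrightarrow> tdeg (p - q) \<le> a"
  using tdeg_add[of p a "-q"] by simp

lemma tdeg_PConst[simp]: "tdeg (PConst c) = 0"
  unfolding tdeg_def PConst_def by auto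

lemma tdeg_one[simp]: "tdeg (1::mpoly) = 0"
  unfolding tdeg_def by auto

lemma tdeg_zero[simp]: "tdeg (0::mpoly) = 0"
  unfolding tdeg_def by auto

lemma tdeg_PVar: "tdeg (PVar x) \<le> 1"
  unfolding tdeg_le_iff PVar_def by (auto simp: mdeg_def)

lemma tdeg_power: "tdeg p \<le> a \<Longrightarrow> tdeg (p ^ n) \<le> n * a"
proof (induction n)
  case 0 then show ?case by simp
next
  case (Suc n)
  have "tdeg (p * p ^ n) \<le> a + n * a" by (rule tdeg_mult[OF Suc.prems Suc.IH[OF Suc.prems]])
  then show ?case by simp
qed

lemma tdeg_sum: "(\<And>x. x \<in> A \<Longrightarrow> tdeg (f x) \<le> a) \<Longrightarrow> tdeg (sum f A) \<le> (a::nat)"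
proof (induction A rule: infinite_finite_induct)
  case (insert x F)
  then show ?case by (simp add: tdeg_add)
qed simp_all

lemma tdeg_mono: "tdeg p \<le> a \<Longrightarrow> a \<le> b \<Longrightarrow> tdeg p \<le> b" by simp


lemma PConst_mult: "PConst (a * b) = PConst a * PConst b"
  unfolding PConst_def by (simp add: mult_single)
lemma PConst_add: "PConst (a + b) = PConst a + PConst b"
  unfolding PConst_def by (simp add: single_add)
lemma PConst_diff: "PConst (a - b) = PConst a - PConst b"
  unfolding PConst_def by (simp add: single_diff)
lemma PConst_1[simp]: "PConst 1 = 1"
  unfolding PConst_def by simp
lemma PConst_0[simp]: "PConst 0 = 0"
  unfolding PConst_def by simp
lemma PConst_power: "PConst (a ^ n) = PConst a ^ n"
  by (induction n) (auto simp: PConst_mult)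

definition Ideal :: "mpoly set \<Rightarrow> nat \<Rightarrow> mpoly \<Rightarrow> bool" where
 "Ideal Eq s p \<longleftrightarrow> (\<exists>es. (\<forall>(h,e)\<in>set es. e\<in>Eq \<and> tdeg h + tdeg e \<le> s) \<and> p = (\<Sum>(h,e)\<leftarrow>es. h*e))"

definition Cone :: "mpoly set \<Rightarrow> nat \<Rightarrow> mpoly \<Rightarrow> bool" where
 "Cone Ineq s p \<longleftrightarrow> (\<exists>ts. (\<forall>(gs,qs)\<in>set ts. set qs \<subseteq> Ineq \<and> (\<forall>g\<in>set gs. 2*tdeg g + sum_list (map tdeg qs) \<le> s)) \<and> p = (\<Sum>(gs,qs)\<leftarrow>ts. (\<Sum>g\<leftarrow>gs. g^2) * prod_list qs))"

lemma Ideal_0: "Ideal Eq s 0"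
  unfolding Ideal_def by (rule exI[of _ "[]"]) simp

lemma Ideal_add: "Ideal Eq s p \<Longrightarrow> Ideal Eq s q \<Longrightarrow> Ideal Eq s (p + q)"
  unfolding Ideal_def
proof (elim exE conjE)
  fix es1 es2 assume "\<forall>(h,e)\<in>set es1. e\<in>Eq \<and> tdeg h + tdeg e \<le> s" "p = (\<Sum>(h,e)\<leftarrow>es1. h*e)"
    "\<forall>(h,e)\<in>set es2. e\<in>Eq \<and> tdeg h + tdeg e \<le> s" "q = (\<Sum>(h,e)\<leftarrow>es2. h*e)"
  then show "\<exists>es. (\<forall>(h,e)\<in>set es. e\<in>Eq \<and> tdeg h + tdeg e \<le> s) \<and> p + q = (\<Sum>(h,e)\<leftarrow>es. h*e)"
    by (intro exI[of _ "es1 @ es2"]) auto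
qed

lemma sum_list_neg_aux: "(\<Sum>(h,e)\<leftarrow>map (\<lambda>(h,e). (q * h, e)) es. h*e) = q * (\<Sum>(h,e)\<leftarrow>es. h*e)"
  for q :: mpoly
  by (induction es) (auto simp: algebra_simps)

lemma Ideal_mult: "Ideal Eq s p \<Longrightarrow> tdeg q \<le> a \<Longrightarrow> Ideal Eq (s + a) (q * p)"
  unfolding Ideal_def
proof (elim exE conjE)
  fix es assume h: "\<forall>(h,e)\<in>set es. e\<in>Eq \<and> tdeg h + tdeg e \<le> s" "p = (\<Sum>(h,e)\<leftarrow>es. h*e)" and q: "tdeg q \<le> a"
  have "\<forall>(h,e)\<in>set (map (\<lambda>(h,e). (q * h, e)) es). e\<in>Eq \<and> tdeg h + tdeg e \<le> s + a"
  proof (clarsimp)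
    fix h e assume "(h,e) \<in> set es"
    with h have "e \<in> Eq" "tdeg h + tdeg e \<le> s" by auto
    moreover have "tdeg (q*h) \<le> a + tdeg h" using tdeg_mult[OF q, of h "tdeg h"] by simp
    ultimately show "e \<in> Eq \<and> tdeg (q * h) + tdeg e \<le> s + a" by simp
  qed
  moreover have "q * p = (\<Sum>(h,e)\<leftarrow>map (\<lambda>(h,e). (q * h, e)) es. h*e)"
    using h(2) sum_list_neg_aux[of q es] by simp
  ultimately show "\<exists>es. (\<forall>(h,e)\<in>set es. e\<in>Eq \<and> tdeg h + tdeg e \<le> s + a) \<and> q * p = (\<Sum>(h,e)\<leftarrow>es. h*e)"
    by blast
qed

lemma Ideal_mono: assumes "Ideal Eq s p" "s \<le> s'" shows "Ideal Eq s' p"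
proof -
  from assms(1) obtain es where h: "\<forall>(h,e)\<in>set es. e\<in>Eq \<and> tdeg h + tdeg e \<le> s" "p = (\<Sum>(h,e)\<leftarrow>es. h*e)"
    unfolding Ideal_def by blast
  have "\<forall>(h,e)\<in>set es. e\<in>Eq \<and> tdeg h + tdeg e \<le> s'" using h(1) assms(2) by fastforce
  then show ?thesis unfolding Ideal_def using h(2) by blast
qed

lemma Ideal_mult': "Ideal Eq s p \<Longrightarrow> tdeg q \<le> a \<Longrightarrow> s + a \<le> s' \<Longrightarrow> Ideal Eq s' (q * p)"
  by (rule Ideal_mono[OF Ideal_mult])

lemma Ideal_const: "Ideal Eq s p \<Longrightarrow> Ideal Eq s (PConst c * p)"
  using Ideal_mult[of Eq s p "PConst c" 0] by simp

lemma Ideal_uminus: "Ideal Eq s p \<Longrightarrow> Ideal Eq s (- p)"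
  using Ideal_mult[of Eq s p "-1" 0] by simp

lemma Ideal_diff: "Ideal Eq s p \<Longrightarrow> Ideal Eq s q \<Longrightarrow> Ideal Eq s (p - q)"
  using Ideal_add[of Eq s p "-q"] Ideal_uminus by auto

lemma Ideal_gen: "e \<in> Eq \<Longrightarrow> tdeg e \<le> s \<Longrightarrow> Ideal Eq s e"
  unfolding Ideal_def by (rule exI[of _ "[(1,e)]"]) simp

lemma Ideal_sum: "(\<And>x. x \<in> A \<Longrightarrow> Ideal Eq s (f x)) \<Longrightarrow> Ideal Eq s (sum f A)"
  by (induction A rule: infinite_finite_induct) (auto intro: Ideal_add Ideal_0)

lemma Cone_0: "Cone I s 0"
  unfolding Cone_def by (rule exI[of _ "[]"]) simp

lemma Cone_add: "Cone I s p \<Longrightarrow> Cone I s q \<Longrightarrow> Cone I s (p + q)"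
  unfolding Cone_def
proof (elim exE conjE)
  fix es1 es2 assume "\<forall>(gs,qs)\<in>set es1. set qs \<subseteq> I \<and> (\<forall>g\<in>set gs. 2*tdeg g + sum_list (map tdeg qs) \<le> s)" "p = (\<Sum>(gs,qs)\<leftarrow>es1. (\<Sum>g\<leftarrow>gs. g^2) * prod_list qs)"
    "\<forall>(gs,qs)\<in>set es2. set qs \<subseteq> I \<and> (\<forall>g\<in>set gs. 2*tdeg g + sum_list (map tdeg qs) \<le> s)" "q = (\<Sum>(gs,qs)\<leftarrow>es2. (\<Sum>g\<leftarrow>gs. g^2) * prod_list qs)"
  then show "\<exists>ts. (\<forall>(gs,qs)\<in>set ts. set qs \<subseteq> I \<and> (\<forall>g\<in>set gs. 2*tdeg g + sum_list (map tdeg qs) \<le> s)) \<and> p + q = (\<Sum>(gs,qs)\<leftarrow>ts. (\<Sum>g\<leftarrow>gs. g^2) * prod_list qs)"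
    by (intro exI[of _ "es1 @ es2"]) auto
qed

lemma Cone_sum: "(\<And>x. x \<in> A \<Longrightarrow> Cone I s (f x)) \<Longrightarrow> Cone I s (sum f A)"
  by (induction A rule: infinite_finite_induct) (auto intro: Cone_add Cone_0)

lemma Cone_sq: "2 * tdeg g \<le> s \<Longrightarrow> Cone I s (g^2)"
  unfolding Cone_def by (rule exI[of _ "[([g],[])]"]) simp

lemma Cone_sq_ineq: "q \<in> I \<Longrightarrow> 2 * tdeg g + tdeg q \<le> s \<Longrightarrow> Cone I s (g^2 * q)"
  unfolding Cone_def by (rule exI[of _ "[([g],[q])]"]) simp

lemma scale_aux1: "0 \<le> c \<Longrightarrow> (\<Sum>g\<leftarrow>map (\<lambda>g. PConst (sqrt c) * g) gs. g^2) = PConst c * (\<Sum>g\<leftarrow>gs. g^2)"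
proof (induction gs)
  case Nil then show ?case by simp
next
  case (Cons a gs)
  have "PConst (sqrt c) ^ 2 = PConst c" using Cons(2) by (simp flip: PConst_power)
  then show ?case using Cons by (simp add: algebra_simps power_mult_distrib)
qed

lemma scale_aux2: assumes c: "0 \<le> c"
  shows "(\<Sum>(gs,qs)\<leftarrow>map (\<lambda>(gs,qs). (map (\<lambda>g. PConst (sqrt c) * g) gs, qs)) ts. (\<Sum>g\<leftarrow>gs. g^2) * prod_list qs)
   = PConst c * (\<Sum>(gs,qs)\<leftarrow>ts. (\<Sum>g\<leftarrow>gs. g^2) * prod_list qs)"
proof (induction ts)
  case Nil then show ?case by simp
next
  case (Cons x ts)
  obtain gs qs where x: "x = (gs, qs)" by (cases x)
  have e: "(\<Sum>g\<leftarrow>map (\<lambda>g. PConst (sqrt c) * g) gs. g^2) = PConst c * (\<Sum>g\<leftarrow>gs. g^2)"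
    by (rule scale_aux1[OF c])
  have "(\<Sum>(gs,qs)\<leftarrow>map (\<lambda>(gs,qs). (map (\<lambda>g. PConst (sqrt c) * g) gs, qs)) (x # ts). (\<Sum>g\<leftarrow>gs. g^2) * prod_list qs)
     = (\<Sum>g\<leftarrow>map (\<lambda>g. PConst (sqrt c) * g) gs. g^2) * prod_list qs + (\<Sum>(gs,qs)\<leftarrow>map (\<lambda>(gs,qs). (map (\<lambda>g. PConst (sqrt c) * g) gs, qs)) ts. (\<Sum>g\<leftarrow>gs. g^2) * prod_list qs)"
    by (simp only: x list.map sum_list.Cons case_prod_conv)
  also have "\<dots> = PConst c * ((\<Sum>g\<leftarrow>gs. g^2) * prod_list qs) + PConst c * (\<Sum>(gs,qs)\<leftarrow>ts. (\<Sum>g\<leftarrow>gs. g^2) * prod_list qs)"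
    by (simp only: e Cons.IH mult.assoc)
  also have "\<dots> = PConst c * (\<Sum>(gs,qs)\<leftarrow>x # ts. (\<Sum>g\<leftarrow>gs. g^2) * prod_list qs)"
    by (simp only: x list.map sum_list.Cons case_prod_conv distrib_left)
  finally show ?case .
qed

lemma tdeg_const_mult: "tdeg (PConst c * g) \<le> tdeg g"
  using tdeg_mult[of "PConst c" 0 g "tdeg g"] by simp

lemma Cone_scale: "0 \<le> c \<Longrightarrow> Cone I s p \<Longrightarrow> Cone I s (PConst c * p)"
  unfolding Cone_def
proof (elim exE conjE)
  fix ts assume c: "0 \<le> c" and h: "\<forall>(gs,qs)\<in>set ts. set qs \<subseteq> I \<and> (\<forall>g\<in>set gs. 2*tdeg g + sum_list (map tdeg qs) \<le> s)" "p = (\<Sum>(gs,qs)\<leftarrow>ts. (\<Sum>g\<leftarrow>gs. g^2) * prod_list qs)"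
  have "\<forall>(gs,qs)\<in>set (map (\<lambda>(gs,qs). (map (\<lambda>g. PConst (sqrt c) * g) gs, qs)) ts). set qs \<subseteq> I \<and> (\<forall>g\<in>set gs. 2*tdeg g + sum_list (map tdeg qs) \<le> s)"
  proof clarsimp
    fix gs qs assume "(gs, qs) \<in> set ts"
    with h(1) have "set qs \<subseteq> I" "\<forall>g\<in>set gs. 2*tdeg g + sum_list (map tdeg qs) \<le> s" by auto
    then show "set qs \<subseteq> I \<and> (\<forall>x\<in>set gs. 2 * tdeg (PConst (sqrt c) * x) + sum_list (map tdeg qs) \<le> s)"
      using tdeg_const_mult[of "sqrt c"] by (meson add_le_mono1 le_trans mult_le_mono2)
  qed
  moreover have "PConst c * p = (\<Sum>(gs,qs)\<leftarrow>map (\<lambda>(gs,qs). (map (\<lambda>g. PConst (sqrt c) * g) gs, qs)) ts. (\<Sum>g\<leftarrow>gs. g^2) * prod_list qs)"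
    using h(2) scale_aux2[OF c, of ts] by simp
  ultimately show "\<exists>ts. (\<forall>(gs,qs)\<in>set ts. set qs \<subseteq> I \<and> (\<forall>g\<in>set gs. 2*tdeg g + sum_list (map tdeg qs) \<le> s)) \<and> PConst c * p = (\<Sum>(gs,qs)\<leftarrow>ts. (\<Sum>g\<leftarrow>gs. g^2) * prod_list qs)"
    by blast
qed

lemma Cone_mono: assumes "Cone I s p" "s \<le> s'" shows "Cone I s' p"
proof -
  from assms(1) obtain ts where h: "\<forall>(gs,qs)\<in>set ts. set qs \<subseteq> I \<and> (\<forall>g\<in>set gs. 2*tdeg g + sum_list (map tdeg qs) \<le> s)" "p = (\<Sum>(gs,qs)\<leftarrow>ts. (\<Sum>g\<leftarrow>gs. g^2) * prod_list qs)"
    unfolding Cone_def by blast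
  have "\<forall>(gs,qs)\<in>set ts. set qs \<subseteq> I \<and> (\<forall>g\<in>set gs. 2*tdeg g + sum_list (map tdeg qs) \<le> s')"
    using h(1) assms(2) by fastforce
  then show ?thesis unfolding Cone_def using h(2) by blast
qed

lemma sos_intro: "Cone I s a \<Longrightarrow> Ideal Eq s b \<Longrightarrow> p = a + b \<Longrightarrow> sos_derivable I Eq s p"
  unfolding Cone_def Ideal_def sos_derivable_def by blast


definition NN :: "nat \<Rightarrow> nat \<Rightarrow> mpoly" where "NN d r = (\<Sum>a<d. Vp r a ^ 2)"
definition PP :: "nat \<Rightarrow> nat \<Rightarrow> nat \<Rightarrow> mpoly" where "PP d r s = (\<Sum>a<d. Vp r a * Vp s a)"

lemma tdeg_Zp: "tdeg (Zp r i j) \<le> 1" by (rule tdeg_PVar)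
lemma tdeg_NN: "tdeg (NN d r) \<le> 2"
  unfolding NN_def by (rule tdeg_sum, rule tdeg_mono[OF tdeg_power[OF tdeg_PVar]]) simp
lemma tdeg_PP: "tdeg (PP d r s) \<le> 2"
  unfolding PP_def by (rule tdeg_sum, rule tdeg_mono[OF tdeg_mult[OF tdeg_PVar tdeg_PVar]]) simp

lemma PConst_numeral: "PConst (numeral w) = numeral w"
  unfolding PConst_def by simp
lemma tdeg_numeral[simp]: "tdeg (numeral w :: mpoly) = 0"
  using tdeg_PConst[of "numeral w"] by (simp add: PConst_numeral)

lemma idem: "r < n \<Longrightarrow> i < k \<Longrightarrow> j < k \<Longrightarrow> Ideal (B_eq n k d) 2 (Zp r i j - Zp r i j ^ 2)"
proof (rule Ideal_gen)
  assume "r < n" "i < k" "j < k"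
  then show "Zp r i j - Zp r i j ^ 2 \<in> B_eq n k d" unfolding B_eq_def by blast
  show "tdeg (Zp r i j - Zp r i j ^ 2) \<le> 2"
    by (rule tdeg_diff[OF tdeg_mono[OF tdeg_PVar] tdeg_mono[OF tdeg_power[OF tdeg_PVar]]]) simp_all
qed

lemma idem': "r < n \<Longrightarrow> i < k \<Longrightarrow> j < k \<Longrightarrow> Ideal (B_eq n k d) 2 (Zp r i j ^ 2 - Zp r i j)"
  using Ideal_uminus[OF idem] by simp

lemma gen3: assumes "r < n" "s < n" "i < k" "j < k" "a < d"
  shows "Ideal (B_eq n k d) 3 (Zp r i j * Zp s i j * (Vp r a - Vp s a))"
proof (rule Ideal_gen)
  show "Zp r i j * Zp s i j * (Vp r a - Vp s a) \<in> B_eq n k d" unfolding B_eq_def using assms by blast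
  have "tdeg (Zp r i j * Zp s i j) \<le> 1 + 1" by (rule tdeg_mult[OF tdeg_PVar tdeg_PVar])
  moreover have "tdeg (Vp r a - Vp s a) \<le> 1" by (rule tdeg_diff[OF tdeg_PVar tdeg_PVar])
  ultimately show "tdeg (Zp r i j * Zp s i j * (Vp r a - Vp s a)) \<le> 3"
    using tdeg_mult by fastforce
qed

lemma lemB1: assumes "r < n" "s < n" "i < k" "j < k"
  shows "Ideal (B_eq n k d) 4 (Zp r i j * Zp s i j * PP d r s - Zp r i j * Zp s i j * NN d s)"
proof -
  have "Zp r i j * Zp s i j * PP d r s - Zp r i j * Zp s i j * NN d s
     = (\<Sum>a<d. Vp s a * (Zp r i j * Zp s i j * (Vp r a - Vp s a)))"
    by (simp add: PP_def NN_def sum_distrib_left sum_subtractf[symmetric] algebra_simps power2_eq_square)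
  also have "Ideal (B_eq n k d) 4 \<dots>"
    by (rule Ideal_sum, rule Ideal_mult'[OF gen3[OF assms] tdeg_PVar]) auto
  finally show ?thesis .
qed

lemma lemB2: assumes "r < n" "s < n" "i < k" "j < k"
  shows "Ideal (B_eq n k d) 4 (Zp r i j * Zp s i j * PP d r s - Zp r i j * Zp s i j * NN d r)"
proof -
  have "Zp r i j * Zp s i j * PP d r s - Zp r i j * Zp s i j * NN d r
     = - (\<Sum>a<d. Vp r a * (Zp r i j * Zp s i j * (Vp r a - Vp s a)))"
    by (simp add: PP_def NN_def sum_distrib_left sum_subtractf[symmetric] sum_negf[symmetric] algebra_simps power2_eq_square)
  also have "Ideal (B_eq n k d) 4 \<dots>"
    by (rule Ideal_uminus, rule Ideal_sum, rule Ideal_mult'[OF gen3[OF assms] tdeg_PVar]) auto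
  finally show ?thesis .
qed

lemma Ideal_pow_cong:
  assumes "Ideal E s0 (e*X - e*Y)" "tdeg X \<le> 2" "tdeg Y \<le> 2"
  shows "Ideal E (s0 + 2*n) (e*X^Suc n - e*Y^Suc n)"
proof (induction n)
  case 0 then show ?case using assms by simp
next
  case (Suc n)
  have "e*X^Suc (Suc n) - e*Y^Suc (Suc n) = X * (e*X^Suc n - e*Y^Suc n) + Y^Suc n * (e*X - e*Y)"
    by (simp add: algebra_simps)
  also have "Ideal E (s0 + 2 * Suc n) \<dots>"
  proof (rule Ideal_add)
    show "Ideal E (s0 + 2 * Suc n) (X * (e * X ^ Suc n - e * Y ^ Suc n))"
      by (rule Ideal_mult'[OF Suc assms(2)]) simp
    show "Ideal E (s0 + 2 * Suc n) (Y ^ Suc n * (e * X - e * Y))"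
      by (rule Ideal_mult'[OF assms(1) tdeg_power[OF assms(3)]]) simp
  qed
  finally show ?case .
qed


lemma key1: assumes "r<n" "s<n" "i<k" "j<k" "t = 2*m" "0<m"
  shows "Ideal (B_eq n k d) (2*t+4) (Zp r i j^2 * Zp s i j^2 * PP d r s ^ t - Zp r i j * Zp s i j * NN d r ^ m * NN d s ^ m)"
proof -
  obtain m' where m: "m = Suc m'" using assms(6) by (cases m) auto
  let ?E = "B_eq n k d"
  let ?e = "Zp r i j * Zp s i j"
  let ?P = "PP d r s"
  let ?Nr = "NN d r"
  let ?Ns = "NN d s"
  have h1: "Ideal ?E (4 + 2*m') (?e * ?P^m - ?e * ?Ns^m)"
    using Ideal_pow_cong[OF lemB1[OF assms(1-4)] tdeg_PP tdeg_NN] m by simp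
  have h2: "Ideal ?E (4 + 2*m') (?e * ?P^m - ?e * ?Nr^m)"
    using Ideal_pow_cong[OF lemB2[OF assms(1-4)] tdeg_PP tdeg_NN] m by simp
  have "?e * ?P^t - ?e * ?Nr^m * ?Ns^m = ?P^m * (?e * ?P^m - ?e * ?Ns^m) + ?Ns^m * (?e * ?P^m - ?e * ?Nr^m)"
    using assms(5) by (simp add: power_mult power2_eq_square algebra_simps)
  also have "Ideal ?E (2*t+2) \<dots>"
    by (rule Ideal_add; rule Ideal_mult'[OF _ tdeg_power[OF tdeg_PP]] Ideal_mult'[OF _ tdeg_power[OF tdeg_NN]])
       (use h1 h2 m assms(5) in auto)
  finally have h3: "Ideal ?E (2*t+2) (?e * ?P^t - ?e * ?Nr^m * ?Ns^m)" .
  have "Zp r i j^2 * Zp s i j^2 * ?P^t - ?e * ?P^t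
     = (Zp r i j^2 * ?P^t) * (Zp s i j^2 - Zp s i j) + (Zp s i j * ?P^t) * (Zp r i j^2 - Zp r i j)"
    by (simp add: algebra_simps power2_eq_square)
  also have "Ideal ?E (2*t+4) \<dots>"
  proof (rule Ideal_add)
    show "Ideal ?E (2*t+4) ((Zp r i j^2 * ?P^t) * (Zp s i j^2 - Zp s i j))"
      by (rule Ideal_mult'[OF idem'[OF assms(2-4)] tdeg_mult[OF tdeg_power[OF tdeg_PVar] tdeg_power[OF tdeg_PP]]]) simp
    show "Ideal ?E (2*t+4) ((Zp s i j * ?P^t) * (Zp r i j^2 - Zp r i j))"
      by (rule Ideal_mult'[OF idem'[OF assms(1,3,4)] tdeg_mult[OF tdeg_PVar tdeg_power[OF tdeg_PP]]]) simp
  qed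
  finally have h4: "Ideal ?E (2*t+4) (Zp r i j^2 * Zp s i j^2 * ?P^t - ?e * ?P^t)" .
  have "Ideal ?E (2*t+4) ((Zp r i j^2 * Zp s i j^2 * ?P^t - ?e * ?P^t) + (?e * ?P^t - ?e * ?Nr^m * ?Ns^m))"
    by (rule Ideal_add[OF h4 Ideal_mono[OF h3]]) simp
  then show ?thesis by (simp add: algebra_simps)
qed

lemma ring_id1: "(zs^2 * (Pm*Pm)) = (zr*zs*A) + ((1 - zr)*zs*Pm)^2 + ((zr^2 * zs^2 * (Pm*Pm) - zr*zs*A) + 2*(zs^2*(Pm*Pm))*(zr - zr^2))"
  for zs zr Pm A :: mpoly
  by (simp add: algebra_simps power2_eq_square)

lemma ineq_mem: "s < n \<Longrightarrow> PConst (2 * (4 * real t) ^ (t div 2)) * NN d s ^ (t div 2) - PConst (1 / real n) * (\<Sum>r<n. PP d r s ^ t) \<in> B_ineq n d t"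
  unfolding B_ineq_def NN_def PP_def
  by (rule CollectI, rule exI[of _ "\<lambda>a. Vp s a"]) (auto intro: tdeg_mono[OF tdeg_PVar])


lemma lemF: assumes S: "S \<subseteq> {..<n}" and ij: "i<k" "j<k" and tm: "t = 2*m" and m0: "0<m"
  shows "\<exists>a b. Cone (B_ineq n d t) (2*t+4) a \<and> Ideal (B_eq n k d) (2*t+4) b \<and>
     PConst (2*(4*real t)^m) * (\<Sum>r\<in>S. Zp r i j * NN d r ^ m) - PConst (1/real n) * (\<Sum>r\<in>S. Zp r i j * NN d r ^ m)^2 = a + b"
proof -
  have md: "t div 2 = m" using tm by simp
  define K0 where "K0 = PConst (2*(4*real t)^m)"
  define ni where "ni = PConst (1/real n)"
  define T where "T = (\<Sum>r\<in>S. Zp r i j * NN d r ^ m)"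
  define q where "q s = K0 * NN d s ^ m - ni * (\<Sum>r<n. PP d r s ^ t)" for s
  define G where "G s = (\<Sum>r\<in>S. ((1 - Zp r i j) * Zp s i j * PP d r s ^ m)^2) + (\<Sum>r\<in>{..<n}-S. (Zp s i j * PP d r s ^ m)^2)" for s
  define J where "J s = (\<Sum>r\<in>S. (Zp r i j^2 * Zp s i j^2 * PP d r s ^ t - Zp r i j * Zp s i j * (NN d r ^ m * NN d s ^ m)) + 2 * (Zp s i j^2 * PP d r s ^ t) * (Zp r i j - Zp r i j^2))" for s
  define W where "W s = (\<Sum>r\<in>S. Zp r i j * Zp s i j * (NN d r ^ m * NN d s ^ m))" for s
  define L where "L s = K0 * (NN d s ^ m * (Zp s i j^2 - Zp s i j)) - ni * J s" for s
  have fin: "finite S" using S finite_subset by blast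
  have Pt: "PP d r s ^ t = PP d r s ^ m * PP d r s ^ m" for r s
    unfolding tm mult_2 power_add ..
  have claim1: "(\<Sum>r<n. Zp s i j^2 * PP d r s ^ t) = W s + G s + J s" if s: "s \<in> S" for s
  proof -
    have split: "{..<n} = S \<union> ({..<n}-S)" using S by blast
    have "(\<Sum>r<n. Zp s i j^2 * PP d r s ^ t) = (\<Sum>r\<in>S. Zp s i j^2 * PP d r s ^ t) + (\<Sum>r\<in>{..<n}-S. Zp s i j^2 * PP d r s ^ t)"
      by (subst split, rule sum.union_disjoint) (use fin in auto)
    also have "(\<Sum>r\<in>S. Zp s i j^2 * PP d r s ^ t) = (\<Sum>r\<in>S. Zp r i j * Zp s i j * (NN d r ^ m * NN d s ^ m) + ((1 - Zp r i j) * Zp s i j * PP d r s ^ m)^2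
         + ((Zp r i j^2 * Zp s i j^2 * PP d r s ^ t - Zp r i j * Zp s i j * (NN d r ^ m * NN d s ^ m)) + 2 * (Zp s i j^2 * PP d r s ^ t) * (Zp r i j - Zp r i j^2)))"
      unfolding Pt by (rule sum.cong[OF refl], rule ring_id1)
    also have "\<dots> = W s + (\<Sum>r\<in>S. ((1 - Zp r i j) * Zp s i j * PP d r s ^ m)^2) + J s"
      unfolding W_def J_def by (simp only: sum.distrib)
    also have "(\<Sum>r\<in>{..<n}-S. Zp s i j^2 * PP d r s ^ t) = (\<Sum>r\<in>{..<n}-S. (Zp s i j * PP d r s ^ m)^2)"
      unfolding Pt by (simp add: power2_eq_square algebra_simps)
    finally show ?thesis unfolding G_def by (simp add: algebra_simps)
  qed
  have claim2: "Zp s i j^2 * q s + ni * G s = K0 * (Zp s i j * NN d s ^ m) - ni * W s + L s" if s: "s \<in> S" for s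
  proof -
    have "Zp s i j^2 * q s = K0 * (Zp s i j^2 * NN d s ^ m) - ni * (\<Sum>r<n. Zp s i j^2 * PP d r s ^ t)"
      unfolding q_def by (simp add: sum_distrib_left algebra_simps)
    then show ?thesis unfolding claim1[OF s] L_def by (simp add: algebra_simps)
  qed
  have T2: "T^2 = (\<Sum>s\<in>S. W s)"
    unfolding power2_eq_square T_def W_def sum_product
    by (rule sum.cong[OF refl], rule sum.cong[OF refl]) (simp add: algebra_simps)
  define a where "a = (\<Sum>s\<in>S. Zp s i j^2 * q s + ni * G s)"
  define b where "b = - (\<Sum>s\<in>S. L s)"
  have "a = (\<Sum>s\<in>S. K0 * (Zp s i j * NN d s ^ m) - ni * W s + L s)"
    unfolding a_def by (rule sum.cong[OF refl]) (rule claim2)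
  also have "\<dots> = K0 * T - ni * T^2 + (\<Sum>s\<in>S. L s)"
    unfolding T2 by (simp add: T_def sum.distrib sum_subtractf sum_distrib_left)
  finally have eq: "K0 * T - ni * T^2 = a + b" unfolding b_def by simp
  have ni0: "0 \<le> 1 / real n" by simp
  have cone: "Cone (B_ineq n d t) (2*t+4) a"
    unfolding a_def
  proof (rule Cone_sum, rule Cone_add)
    fix s assume s: "s \<in> S"
    then have sn: "s < n" using S by auto
    have qm: "q s \<in> B_ineq n d t" using ineq_mem[OF sn, of t d] unfolding q_def K0_def ni_def md .
    have "tdeg (q s) \<le> 2 * t"
      unfolding q_def K0_def ni_def
    proof (rule tdeg_diff)
      show "tdeg (PConst (2 * (4 * real t) ^ m) * NN d s ^ m) \<le> 2 * t"
        by (rule tdeg_mono[OF tdeg_mult[OF eq_imp_le[OF tdeg_PConst] tdeg_power[OF tdeg_NN]]]) (simp add: tm)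
      show "tdeg (PConst (1 / real n) * (\<Sum>r<n. PP d r s ^ t)) \<le> 2 * t"
        by (rule tdeg_mono[OF tdeg_mult[OF eq_imp_le[OF tdeg_PConst] tdeg_sum[of "{..<n}" "\<lambda>r. PP d r s ^ t" "t * 2"]]])
           (auto intro: tdeg_power[OF tdeg_PP])
    qed
    then show "Cone (B_ineq n d t) (2*t+4) (Zp s i j^2 * q s)"
      using Cone_sq_ineq[OF qm, of "Zp s i j" "2*t+4"] tdeg_PVar[of "Zv s i j"] by simp
    show "Cone (B_ineq n d t) (2*t+4) (ni * G s)"
      unfolding ni_def
    proof (rule Cone_scale[OF ni0])
      have d1: "tdeg (1 - Zp r i j) \<le> 1" for r by (rule tdeg_diff[OF _ tdeg_PVar]) simp
      show "Cone (B_ineq n d t) (2*t+4) (G s)"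
        unfolding G_def
      proof (rule Cone_add; rule Cone_sum; rule Cone_sq)
        fix r
        show "2 * tdeg ((1 - Zp r i j) * Zp s i j * PP d r s ^ m) \<le> 2*t+4"
        proof -
          have "tdeg ((1 - Zp r i j) * Zp s i j * PP d r s ^ m) \<le> 1 + 1 + m * 2"
            by (rule tdeg_mult[OF tdeg_mult[OF d1 tdeg_PVar] tdeg_power[OF tdeg_PP]])
          then show ?thesis using tm by simp
        qed
        show "2 * tdeg (Zp s i j * PP d r s ^ m) \<le> 2*t+4"
        proof -
          have "tdeg (Zp s i j * PP d r s ^ m) \<le> 1 + m * 2"
            by (rule tdeg_mult[OF tdeg_PVar tdeg_power[OF tdeg_PP]])
          then show ?thesis using tm by simp
        qed
      qed
    qed
  qed
  have ideal: "Ideal (B_eq n k d) (2*t+4) b"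
    unfolding b_def
  proof (rule Ideal_uminus, rule Ideal_sum)
    fix s assume s: "s \<in> S"
    then have sn: "s < n" using S by auto
    show "Ideal (B_eq n k d) (2*t+4) (L s)"
      unfolding L_def K0_def ni_def
    proof (rule Ideal_diff; rule Ideal_const)
      show "Ideal (B_eq n k d) (2*t+4) (NN d s ^ m * (Zp s i j^2 - Zp s i j))"
        by (rule Ideal_mult'[OF idem'[OF sn ij] tdeg_power[OF tdeg_NN]]) (use tm in simp)
      show "Ideal (B_eq n k d) (2*t+4) (J s)"
        unfolding J_def
      proof (rule Ideal_sum, rule Ideal_add)
        fix r assume r: "r \<in> S"
        then have rn: "r < n" using S by auto
        show "Ideal (B_eq n k d) (2*t+4) (Zp r i j^2 * Zp s i j^2 * PP d r s ^ t - Zp r i j * Zp s i j * (NN d r ^ m * NN d s ^ m))"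
          using key1[OF rn sn ij tm m0] by (simp only: mult.assoc)
        have dg: "tdeg (2 * (Zp s i j^2 * PP d r s ^ t)) \<le> 0 + (2*1 + t*2)"
          by (rule tdeg_mult[OF eq_imp_le[OF tdeg_numeral] tdeg_mult[OF tdeg_power[OF tdeg_PVar] tdeg_power[OF tdeg_PP]]])
        show "Ideal (B_eq n k d) (2*t+4) (2 * (Zp s i j^2 * PP d r s ^ t) * (Zp r i j - Zp r i j^2))"
          by (rule Ideal_mult'[OF idem[OF rn ij] dg]) simp
      qed
    qed
  qed
  show ?thesis using cone ideal eq unfolding K0_def ni_def T_def by blast
qed


lemma quad: "PConst k0 + PConst \<alpha> * (PConst \<beta> * T - PConst \<gamma>)^2 + PConst e * (PConst f * T - PConst g * T^2)
  = PConst (k0 + \<alpha>*\<gamma>^2) + PConst (e*f - 2*\<alpha>*\<beta>*\<gamma>) * T + PConst (\<alpha>*\<beta>^2 - e*g) * T^2"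
  by (simp add: PConst_add PConst_diff PConst_mult PConst_numeral algebra_simps power2_eq_square)

theorem lemma5p3:
  shows "\<exists>C::nat. \<forall>(t::nat) (n::nat) (k::nat) (d::nat) (c::nat) (S::nat set) (i::nat) (j::nat).
    even t \<longrightarrow> 0 < t \<longrightarrow> 0 < n \<longrightarrow> 0 < k \<longrightarrow>
    S \<subseteq> {..<n} \<longrightarrow> real n / real k ^ c \<le> real (card S) \<longrightarrow> i < k \<longrightarrow> j < k \<longrightarrow>
    sos_derivable (B_ineq n d t) (B_eq n k d) (C * t)
      (PConst (2 * real k ^ c * (4 * real t) ^ (t div 2))
       - PConst (1 / real (card S)) * (\<Sum>r\<in>S. Zp r i j * (\<Sum>a<d. Vp r a ^ 2) ^ (t div 2)))"
proof (rule exI[of _ 5], intro allI impI)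
  fix t n k d c i j :: nat and S :: "nat set"
  assume ev: "even t" and t0: "0 < t" and n0: "0 < n" and k0: "0 < k" and S: "S \<subseteq> {..<n}"
    and card: "real n / real k ^ c \<le> real (card S)" and ij: "i < k" "j < k"
  define m where "m = t div 2"
  have tm: "t = 2*m" using ev unfolding m_def by simp
  have m0: "0 < m" using tm t0 by simp
  define \<sigma> where "\<sigma> = real (card S)"
  have kc: "0 < real k ^ c" using k0 by simp
  have sig: "0 < \<sigma>" unfolding \<sigma>_def using card kc n0
    by (smt (verit, best) divide_pos_pos of_nat_0_less_iff)
  define K0 where "K0 = 2 * (4 * real t) ^ m"
  have K0p: "0 < K0" unfolding K0_def using t0 by simp
  define K where "K = 2 * real k ^ c * (4 * real t) ^ m"
  have KK: "K = real k ^ c * K0" unfolding K_def K0_def by simp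
  define Cp where "Cp = real n * K0 / \<sigma>"
  have Cp0: "0 < Cp" unfolding Cp_def using n0 K0p sig by simp
  have nsig: "real n / \<sigma> \<le> real k ^ c"
    using card kc sig unfolding \<sigma>_def by (simp add: divide_le_eq field_simps)
  have KC: "0 \<le> K - Cp"
  proof -
    have "Cp = (real n / \<sigma>) * K0" unfolding Cp_def by simp
    also have "\<dots> \<le> real k ^ c * K0" by (rule mult_right_mono[OF nsig]) (use K0p in simp)
    finally show ?thesis unfolding KK by simp
  qed
  define T where "T = (\<Sum>r\<in>S. Zp r i j * NN d r ^ m)"
  obtain a b where cone: "Cone (B_ineq n d t) (2*t+4) a" and ideal: "Ideal (B_eq n k d) (2*t+4) b"
    and ab: "PConst K0 * T - PConst (1/real n) * T^2 = a + b"
    using lemF[OF S ij tm m0, of d] unfolding K0_def T_def by blast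
  define e where "e = real n / (Cp * \<sigma>^2)"
  have e0: "0 \<le> e" unfolding e_def using Cp0 sig by simp
  have deg: "2*t+4 \<le> 5*t" using tm m0 by simp
  have tgt: "PConst (2 * real k ^ c * (4 * real t) ^ (t div 2))
       - PConst (1 / real (card S)) * (\<Sum>r\<in>S. Zp r i j * (\<Sum>a<d. Vp r a ^ 2) ^ (t div 2))
       = PConst K - PConst (1/\<sigma>) * T"
    unfolding K_def T_def NN_def m_def \<sigma>_def by simp
  have "PConst K - PConst (1/\<sigma>) * T = PConst (K - Cp + (1/Cp)*Cp^2) + PConst (e*K0 - 2*(1/Cp)*(1/\<sigma>)*Cp) * T + PConst ((1/Cp)*(1/\<sigma>)^2 - e*(1/real n)) * T^2"
  proof -
    have c1: "K - Cp + (1/Cp)*Cp^2 = K" using Cp0 by (simp add: power2_eq_square)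
    have c2: "e*K0 - 2*(1/Cp)*(1/\<sigma>)*Cp = - (1/\<sigma>)" unfolding e_def Cp_def using sig n0 K0p
      by (simp add: field_simps power2_eq_square)
    have c3: "(1/Cp)*(1/\<sigma>)^2 - e*(1/real n) = 0" unfolding e_def using sig n0 Cp0
      by (simp add: field_simps power2_eq_square)
    have "PConst (- (1/\<sigma>)) = - PConst (1/\<sigma>)" using PConst_diff[of 0 "1/\<sigma>"] by simp
    then show ?thesis unfolding c1 c2 c3 by simp
  qed
  also have "\<dots> = PConst (K - Cp) + PConst (1/Cp) * (PConst (1/\<sigma>) * T - PConst Cp)^2 + PConst e * (PConst K0 * T - PConst (1/real n) * T^2)"
    by (rule quad[symmetric])
  also have "\<dots> = (PConst (K - Cp) * 1^2 + PConst (1/Cp) * (PConst (1/\<sigma>) * T - PConst Cp)^2 + PConst e * a) + PConst e * b"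
    unfolding ab by (simp add: algebra_simps)
  finally have eqn: "PConst K - PConst (1/\<sigma>) * T = (PConst (K - Cp) * 1^2 + PConst (1/Cp) * (PConst (1/\<sigma>) * T - PConst Cp)^2 + PConst e * a) + PConst e * b" .
  have dT: "tdeg T \<le> 1 + m*2"
    unfolding T_def by (rule tdeg_sum, rule tdeg_mult[OF tdeg_PVar tdeg_power[OF tdeg_NN]])
  have dX: "tdeg (PConst (1/\<sigma>) * T - PConst Cp) \<le> 1 + m*2"
    by (rule tdeg_diff[OF tdeg_mono[OF tdeg_mult[OF eq_imp_le[OF tdeg_PConst] dT]]]) auto
  show "sos_derivable (B_ineq n d t) (B_eq n k d) (5 * t)
      (PConst (2 * real k ^ c * (4 * real t) ^ (t div 2))
       - PConst (1 / real (card S)) * (\<Sum>r\<in>S. Zp r i j * (\<Sum>a<d. Vp r a ^ 2) ^ (t div 2)))"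
    unfolding tgt
  proof (rule sos_intro[OF _ _ eqn])
    show "Cone (B_ineq n d t) (5 * t) (PConst (K - Cp) * 1^2 + PConst (1/Cp) * (PConst (1/\<sigma>) * T - PConst Cp)^2 + PConst e * a)"
    proof (intro Cone_add)
      show "Cone (B_ineq n d t) (5 * t) (PConst (K - Cp) * 1^2)"
        by (rule Cone_scale[OF KC Cone_sq]) simp
      show "Cone (B_ineq n d t) (5 * t) (PConst (1/Cp) * (PConst (1/\<sigma>) * T - PConst Cp)^2)"
        by (rule Cone_scale, use Cp0 in simp, rule Cone_sq) (use dX tm m0 in simp)
      show "Cone (B_ineq n d t) (5 * t) (PConst e * a)"
        by (rule Cone_scale[OF e0 Cone_mono[OF cone deg]])
    qed
    show "Ideal (B_eq n k d) (5 * t) (PConst e * b)"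
      by (rule Ideal_const[OF Ideal_mono[OF ideal deg]])
  qed
qed

end
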